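(* Let $u_{nm}=\dfrac{4}{(m+2)(m+3)(m+4)}$ for $0\le n\le m$, and let $U(x)=\sum_{0\le n\le m<\infty}u_{nm}L_{nm}(x)$ for $x\in[-1,1]\setminus D$. Then $$\int_0^1U(x)\,dx=\pi-3\qquad\text{and}\qquad U\!\left(\tfrac13\right)=\operatorname*{ess\,sup}_{x\in[-1,1]}U(x)=2\ln2-1.$$
   Context: Signed binary expansion: every $x\in[-1,1]$ can be written as $x=\sum_{n=0}^{\infty}x_n2^{-(n+1)}$ with digits $x_n\in\{-1,+1\}$; there is a countable set $D\subset[-1,1]$ (consisting of certain dyadic rationals) outside of which this expansion is unique. For $x\in[-1,1]\setminus D$ with digits $(x_n)_{n\ge0}$ and integers $0\le n\le m$, define the loop-counting function $L_{nm}(x)=1$ if $\sum_{j=n}^{m}x_j=0$ and $L_{nm}(x)=0$ otherwise. (Note $\tfrac13\notin D$: it has digits $+1,-1,+1,-1,\dots$.) *)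

theory Defs
  imports "HOL-Analysis.Analysis" "HOL-Probability.Essential_Supremum"
begin

definition signed_expansion :: "real \<Rightarrow> (nat \<Rightarrow> int) \<Rightarrow> bool" where
  "signed_expansion x d \<longleftrightarrow> (\<forall>n. d n \<in> {-1, 1}) \<and> (\<lambda>n. real_of_int (d n) / 2 ^ (n + 1)) sums x"

definition Dset :: "real set" where
  "Dset = {x \<in> {-1..1}. \<not> (\<exists>!d. signed_expansion x d)}"

text \<open>The digits of x (meaningful for x in [-1,1] outside D).\<close>
definition digit :: "real \<Rightarrow> nat \<Rightarrow> int" where
  "digit x = (THE d. signed_expansion x d)"

definition L :: "nat \<Rightarrow> nat \<Rightarrow> real \<Rightarrow> real" where
  "L n m x = (if (\<Sum>j=n..m. digit x j) = 0 then 1 else 0)"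

definition u :: "nat \<Rightarrow> nat \<Rightarrow> real" where
  "u n m = 4 / ((real m + 2) * (real m + 3) * (real m + 4))"

definition U :: "real \<Rightarrow> real" where
  "U x = (\<Sum>\<^sub>\<infinity>(n, m) \<in> {(n, m). n \<le> m}. u n m * L n m x)"

end

theory Submission
  imports Defs
begin

definition cons :: "int \<Rightarrow> (nat \<Rightarrow> int) \<Rightarrow> nat \<Rightarrow> int" where
  "cons a d = (\<lambda>i. case i of 0 \<Rightarrow> a | Suc j \<Rightarrow> d j)"

lemma cons_0[simp]: "cons a d 0 = a" and cons_Suc[simp]: "cons a d (Suc i) = d i"
  by (auto simp: cons_def)

lemma se_sums: "signed_expansion x d \<Longrightarrow> (\<lambda>n. real_of_int (d n) / 2^(n+1)) sums x"
  by (simp add: signed_expansion_def)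

lemma se_dig: "signed_expansion x d \<Longrightarrow> d n \<in> {-1,1}"
  by (simp add: signed_expansion_def)

lemma se_cons:
  assumes "signed_expansion y e" "a \<in> {-1,1}"
  shows "signed_expansion ((y + a)/2) (cons a e)"
proof -
  have "(\<lambda>n. real_of_int (e n) / 2^(n+1) / 2) sums (y/2)"
    using sums_divide[OF se_sums[OF assms(1)]] .
  hence "(\<lambda>n. real_of_int (cons a e (Suc n)) / 2^(Suc n + 1)) sums (y/2)"
    by (simp add: field_simps)
  hence "(\<lambda>n. real_of_int (cons a e n) / 2^(n + 1)) sums (y/2 + a/2)"
    by (subst (asm) sums_Suc_iff) simp
  moreover have "cons a e n \<in> {-1,1}" for n
    using assms se_dig by (cases n) auto
  ultimately show ?thesis unfolding signed_expansion_def
    by (simp add: add_divide_distrib)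
qed

lemma se_shift:
  assumes "signed_expansion x d"
  shows "signed_expansion (2*x - d 0) (\<lambda>i. d (Suc i))"
proof -
  have "(\<lambda>n. real_of_int (d (Suc n)) / 2^(Suc n+1)) sums (x - d 0 / 2)"
    using se_sums[OF assms] by (subst sums_Suc_iff) simp
  from sums_mult[OF this, of 2]
  have "(\<lambda>n. 2 * (real_of_int (d (Suc n)) / 2^(Suc n+1))) sums (2*(x - d 0 / 2))" .
  moreover have "(\<lambda>n. 2 * (real_of_int (d (Suc n)) / 2^(Suc n+1))) = (\<lambda>n. real_of_int (d (Suc n)) / 2^(n+1))"
    by auto
  moreover have "2*(x - d 0 / 2) = 2*x - d 0" by simp
  ultimately have "(\<lambda>n. real_of_int (d (Suc n)) / 2^(n+1)) sums (2*x - d 0)" by simp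
  thus ?thesis using assms unfolding signed_expansion_def by auto
qed

lemma se_bound:
  assumes "signed_expansion x d"
  shows "-1 \<le> x \<and> x \<le> 1"
proof -
  have g: "(\<lambda>n. 1 / 2^(n+1)) sums (1::real)"
    using power_half_series by (simp add: power_divide)
  have g2: "(\<lambda>n. - 1 / 2^(n+1)) sums (-1::real)"
    using sums_minus[OF g] by simp
  have le1: "real_of_int (d n) / 2^(n+1) \<le> 1/2^(n+1)" for n
    using se_dig[OF assms, of n] by (cases "d n = 1") auto
  have le2: "-1/2^(n+1) \<le> real_of_int (d n) / 2^(n+1)" for n
    using se_dig[OF assms, of n] by (cases "d n = 1") auto
  have "x \<le> 1"
    by (rule sums_le[OF le1 se_sums[OF assms] g])
  moreover have "-1 \<le> x"
    by (rule sums_le[OF le2 g2 se_sums[OF assms]])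
  ultimately show ?thesis by simp
qed

lemma se_first_pos:
  assumes "signed_expansion x d" "x > 0" shows "d 0 = 1"
proof -
  have "2*x - d 0 \<le> 1" using se_bound[OF se_shift[OF assms(1)]] by simp
  thus ?thesis using se_dig[OF assms(1), of 0] assms(2) by auto
qed

lemma se_first_neg:
  assumes "signed_expansion x d" "x < 0" shows "d 0 = -1"
proof -
  have "-1 \<le> 2*x - d 0" using se_bound[OF se_shift[OF assms(1)]] by simp
  thus ?thesis using se_dig[OF assms(1), of 0] assms(2) by auto
qed

lemma se_tail:
  assumes "signed_expansion x d"
  shows "signed_expansion (2^k * (x - (\<Sum>i<k. real_of_int (d i) / 2^(i+1)))) (\<lambda>i. d (i+k))"
proof (induction k)
  case 0 thus ?case using assms by simp
next
  case (Suc k)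
  from se_shift[OF Suc]
  have "signed_expansion (2 * (2^k * (x - (\<Sum>i<k. real_of_int (d i) / 2^(i+1)))) - d k) (\<lambda>i. d (i + Suc k))"
    by simp
  moreover have "2 * (2^k * (x - (\<Sum>i<k. real_of_int (d i) / 2^(i+1)))) - d k
      = 2^Suc k * (x - (\<Sum>i<Suc k. real_of_int (d i) / 2^(i+1)))"
    by (simp add: field_simps)
  ultimately show ?case by simp
qed

definition Cset :: "real set" where
  "Cset = range (\<lambda>(j::int, k::nat). real_of_int j / 2^k)"

lemma countable_Cset: "countable Cset"
  unfolding Cset_def by simp

lemma partial_ex: "\<exists>j. (\<Sum>i<k. real_of_int (d i) / 2^(i+1)) = real_of_int j / 2^k"
proof (induction k)
  case 0 show ?case by (auto intro!: exI[where x=0])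
next
  case (Suc k)
  then obtain j where j: "(\<Sum>i<k. real_of_int (d i) / 2^(i+1)) = real_of_int j / 2^k"
    by auto
  have "(\<Sum>i<Suc k. real_of_int (d i) / 2^(i+1)) = real_of_int (2*j + d k) / 2^(Suc k)"
    using j by (simp add: field_simps)
  thus ?case by blast
qed

lemma partial_in_C: "(\<Sum>i<k. real_of_int (d i) / 2^(i+1)) \<in> Cset"
proof -
  obtain j where "(\<Sum>i<k. real_of_int (d i) / 2^(i+1)) = real_of_int j / 2^k"
    using partial_ex by blast
  thus ?thesis unfolding Cset_def by (auto intro!: image_eqI[where x="(j, k)"])
qed

lemma se_unique:
  assumes "x \<notin> Cset" "signed_expansion x d" "signed_expansion x e"
  shows "d = e"
proof (rule ccontr)
  assume "d \<noteq> e"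
  then obtain k0 where "d k0 \<noteq> e k0" by auto
  then obtain k where k: "d k \<noteq> e k" and kmin: "\<And>i. d i \<noteq> e i \<Longrightarrow> k \<le> i"
    using ex_has_least_nat[of "\<lambda>i. d i \<noteq> e i" k0 id] by auto
  have eqS: "(\<Sum>i<k. real_of_int (d i) / 2^(i+1)) = (\<Sum>i<k. real_of_int (e i) / 2^(i+1))"
    by (rule sum.cong) (use kmin in force)+
  define y where "y = 2^k * (x - (\<Sum>i<k. real_of_int (d i) / 2^(i+1)))"
  have sd: "signed_expansion y (\<lambda>i. d (i+k))" using se_tail[OF assms(2)] y_def by simp
  have se: "signed_expansion y (\<lambda>i. e (i+k))" using se_tail[OF assms(3)] y_def eqS by simp
  have "y = 0"
  proof (rule ccontr)
    assume "y \<noteq> 0"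
    then consider "y > 0" | "y < 0" by linarith
    thus False
    proof cases
      case 1 thus False using se_first_pos[OF sd 1] se_first_pos[OF se 1] k by simp
    next
      case 2 thus False using se_first_neg[OF sd 2] se_first_neg[OF se 2] k by simp
    qed
  qed
  hence "x = (\<Sum>i<k. real_of_int (d i) / 2^(i+1))" unfolding y_def by simp
  thus False using assms(1) partial_in_C by metis
qed

fun rr :: "real \<Rightarrow> nat \<Rightarrow> real" where
  "rr x 0 = x"
| "rr x (Suc n) = 2 * rr x n - (if rr x n \<ge> 0 then 1 else -1)"

lemma rr_bound: "\<bar>x\<bar> \<le> 1 \<Longrightarrow> \<bar>rr x n\<bar> \<le> 1"
  by (induction n) auto

lemma se_exists:
  assumes "-1 \<le> x" "x \<le> 1"
  shows "\<exists>d. signed_expansion x d"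
proof -
  define gd where "gd n = (if rr x n \<ge> 0 then 1 else -1 :: int)" for n
  have eq: "x = (\<Sum>i<n. real_of_int (gd i) / 2^(i+1)) + rr x n / 2^n" for n
  proof (induction n)
    case 0 thus ?case by simp
  next
    case (Suc n)
    show ?case by (subst Suc) (simp add: gd_def field_simps)
  qed
  have b: "\<bar>rr x n\<bar> \<le> 1" for n using rr_bound assms by auto
  have "(\<lambda>n. rr x n / 2^n) \<longlonglongrightarrow> 0"
  proof (rule Lim_null_comparison)
    show "\<forall>\<^sub>F n in sequentially. norm (rr x n / 2^n) \<le> (1/2)^n"
      using b by (auto simp: power_divide divide_simps)
    show "(\<lambda>n. (1/2::real)^n) \<longlonglongrightarrow> 0" by (rule LIMSEQ_realpow_zero) auto
  qed
  hence "(\<lambda>n. x - rr x n / 2^n) \<longlonglongrightarrow> x - 0" by (intro tendsto_intros)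
  have "(\<lambda>n. \<Sum>i<n. real_of_int (gd i) / 2^(i+1)) \<longlonglongrightarrow> x"
  proof -
    have "(\<lambda>n. \<Sum>i<n. real_of_int (gd i) / 2^(i+1)) = (\<lambda>n. x - rr x n / 2^n)"
      using eq by (auto simp: algebra_simps)
    thus ?thesis using \<open>(\<lambda>n. x - rr x n / 2^n) \<longlonglongrightarrow> x - 0\<close> by simp
  qed
  hence "signed_expansion x gd" unfolding signed_expansion_def sums_def gd_def by auto
  thus ?thesis by blast
qed

lemma digit_se:
  assumes "-1 \<le> x" "x \<le> 1" "x \<notin> Cset"
  shows "signed_expansion x (digit x)"
proof -
  have "\<exists>!d. signed_expansion x d" using se_exists[OF assms(1,2)] se_unique[OF assms(3)] by blast
  thus ?thesis unfolding digit_def by (rule theI')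
qed

lemma digit_eq:
  assumes "x \<notin> Cset" "signed_expansion x d"
  shows "digit x = d"
  using se_unique[OF assms(1) digit_se assms(2)] se_bound[OF assms(2)] assms by auto

lemma Dset_sub: "Dset \<subseteq> Cset"
  unfolding Dset_def using se_exists se_unique by auto

lemma negligible_Cset: "negligible Cset"
proof -
  have "negligible (\<Union>((\<lambda>x. {x}) ` Cset))"
    by (rule negligible_countable_Union) (use countable_Cset in auto)
  thus ?thesis by simp
qed

lemma Cset_aff1: assumes "x \<notin> Cset" shows "2*x - 1 \<notin> Cset"
proof
  assume "2*x - 1 \<in> Cset"
  then obtain j k where jk: "2*x - 1 = real_of_int j / 2^k" unfolding Cset_def by auto
  hence "x = real_of_int (j + 2^k) / 2^(Suc k)" by (simp add: field_simps)
  hence "x \<in> Cset" unfolding Cset_def by (auto intro!: image_eqI[where x="(j + 2^k, Suc k)"])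
  thus False using assms by simp
qed

lemma Cset_aff2: assumes "x \<notin> Cset" shows "2*x + 1 \<notin> Cset"
proof
  assume "2*x + 1 \<in> Cset"
  then obtain j k where jk: "2*x + 1 = real_of_int j / 2^k" unfolding Cset_def by auto
  hence "x = real_of_int (j - 2^k) / 2^(Suc k)" by (simp add: field_simps)
  hence "x \<in> Cset" unfolding Cset_def by (auto intro!: image_eqI[where x="(j - 2^k, Suc k)"])
  thus False using assms by simp
qed

lemma digit_pos:
  assumes "0 \<le> x" "x \<le> 1" "x \<notin> Cset"
  shows "digit x = cons 1 (digit (2*x - 1))"
proof -
  have y: "-1 \<le> 2*x - 1" "2*x - 1 \<le> 1" "2*x - 1 \<notin> Cset" using assms Cset_aff1 by auto
  from se_cons[OF digit_se[OF y], of 1]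
  have "signed_expansion x (cons 1 (digit (2*x - 1)))" by simp
  thus ?thesis using digit_eq assms(3) by blast
qed

lemma digit_neg:
  assumes "-1 \<le> x" "x \<le> 0" "x \<notin> Cset"
  shows "digit x = cons (-1) (digit (2*x + 1))"
proof -
  have y: "-1 \<le> 2*x + 1" "2*x + 1 \<le> 1" "2*x + 1 \<notin> Cset" using assms Cset_aff2 by auto
  from se_cons[OF digit_se[OF y], of "-1"]
  have "signed_expansion x (cons (-1) (digit (2*x + 1)))" by simp
  thus ?thesis using digit_eq assms(3) by blast
qed

lemma half_pos:
  fixes F :: "(nat \<Rightarrow> int) \<Rightarrow> real" and I :: real
  assumes "((\<lambda>y. F (cons 1 (digit y))) has_integral I) {-1..1}"
  shows "((\<lambda>x. F (digit x)) has_integral I/2) {0..1}"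
proof -
  have "((\<lambda>y. F (cons 1 (digit y))) has_integral I) (cbox (-1) 1)" using assms by simp
  from has_integral_affinity'[OF this, of 2 "-1"]
  have "((\<lambda>x. F (cons 1 (digit (2*x - 1)))) has_integral I/2) (cbox 0 1)"
    by simp
  hence h: "((\<lambda>x. F (cons 1 (digit (2*x - 1)))) has_integral I/2) {0..1}" by simp
  show ?thesis
    by (rule has_integral_spike[OF negligible_Cset _ h]) (simp add: digit_pos)
qed

lemma half_neg:
  fixes F :: "(nat \<Rightarrow> int) \<Rightarrow> real" and I :: real
  assumes "((\<lambda>y. F (cons (-1) (digit y))) has_integral I) {-1..1}"
  shows "((\<lambda>x. F (digit x)) has_integral I/2) {-1..0}"
proof -
  have "((\<lambda>y. F (cons (-1) (digit y))) has_integral I) (cbox (-1) 1)" using assms by simp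
  from has_integral_affinity'[OF this, of 2 "1"]
  have "((\<lambda>x. F (cons (-1) (digit (2*x + 1)))) has_integral I/2) (cbox (-1) 0)"
    by (simp add: add.commute)
  hence h: "((\<lambda>x. F (cons (-1) (digit (2*x + 1)))) has_integral I/2) {-1..0}" by simp
  show ?thesis
    by (rule has_integral_spike[OF negligible_Cset _ h]) (simp add: digit_neg)
qed

definition dep :: "nat \<Rightarrow> ((nat \<Rightarrow> int) \<Rightarrow> real) \<Rightarrow> bool" where
  "dep N F \<longleftrightarrow> (\<forall>d d'. (\<forall>i<N. d i = d' i) \<longrightarrow> F d = F d')"

fun E :: "nat \<Rightarrow> ((nat \<Rightarrow> int) \<Rightarrow> real) \<Rightarrow> real" where
  "E 0 F = F (\<lambda>_. 1)"
| "E (Suc N) F = (E N (\<lambda>d. F (cons 1 d)) + E N (\<lambda>d. F (cons (-1) d))) / 2"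

lemma dep_cons: "dep (Suc N) F \<Longrightarrow> dep N (\<lambda>d. F (cons a d))"
  unfolding dep_def
proof (intro allI impI)
  fix d d' :: "nat \<Rightarrow> int"
  assume H: "\<forall>d d'. (\<forall>i<Suc N. d i = d' i) \<longrightarrow> F d = F d'" and eq: "\<forall>i<N. d i = d' i"
  have "\<forall>i<Suc N. cons a d i = cons a d' i"
    using eq by (auto simp: cons_def split: nat.split)
  thus "F (cons a d) = F (cons a d')" using H by blast
qed

lemma int_main:
  "dep N F \<Longrightarrow> ((\<lambda>x. F (digit x)) has_integral (2 * E N F)) {-1..1}"
proof (induction N arbitrary: F)
  case 0
  hence "F d = F (\<lambda>_. 1)" for d unfolding dep_def by auto
  hence eq: "(\<lambda>x. F (digit x)) = (\<lambda>x. F (\<lambda>_. 1))" by auto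
  show ?case unfolding eq using has_integral_const_real[of "F (\<lambda>_. 1)" "-1" 1] by simp
next
  case (Suc N)
  have p: "((\<lambda>x. F (digit x)) has_integral E N (\<lambda>d. F (cons 1 d))) {0..1}"
    using half_pos[OF Suc.IH[OF dep_cons[OF Suc.prems]]] by simp
  have n: "((\<lambda>x. F (digit x)) has_integral E N (\<lambda>d. F (cons (-1) d))) {-1..0}"
    using half_neg[OF Suc.IH[OF dep_cons[OF Suc.prems]]] by simp
  have eq: "2 * E (Suc N) F = E N (\<lambda>d. F (cons (-1) d)) + E N (\<lambda>d. F (cons 1 d))" by simp
  show ?case unfolding eq by (rule has_integral_combine[OF _ _ n p]) auto
qed

lemma int01:
  "dep (Suc N) F \<Longrightarrow> ((\<lambda>x. F (digit x)) has_integral E N (\<lambda>d. F (cons 1 d))) {0..1}"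
  using half_pos[OF int_main[OF dep_cons[of N F 1]]] by simp

lemma E_cong:
  "(\<And>d. (\<forall>i. d i \<in> {-1,1}) \<Longrightarrow> F d = G d) \<Longrightarrow> E N F = E N G"
proof (induction N arbitrary: F G)
  case 0 thus ?case by simp
next
  case (Suc N)
  have c: "(\<forall>i. d i \<in> {-1,1}) \<Longrightarrow> (\<forall>i. cons a d i \<in> {-1,1})" if "a \<in> {-1,1}" for a d
    using that by (auto simp: cons_def split: nat.split)
  have "E N (\<lambda>d. F (cons 1 d)) = E N (\<lambda>d. G (cons 1 d))"
    by (rule Suc.IH) (use Suc.prems c in auto)
  moreover have "E N (\<lambda>d. F (cons (-1) d)) = E N (\<lambda>d. G (cons (-1) d))"
    by (rule Suc.IH) (use Suc.prems c in auto)
  ultimately show ?case by simp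
qed

lemma E_const: "E N (\<lambda>_. c) = c"
  by (induction N) auto

lemma E_shift:
  assumes "dep k G"
  shows "E (n + k) (\<lambda>d. G (\<lambda>i. d (n+i))) = E k G"
proof (induction n)
  case 0 thus ?case by simp
next
  case (Suc n)
  have "(\<lambda>d. G (\<lambda>i. cons a d (Suc n + i))) = (\<lambda>d. G (\<lambda>i. d (n+i)))" for a
    by simp
  thus ?case using Suc by simp
qed

definition ones :: "nat \<Rightarrow> (nat \<Rightarrow> int) \<Rightarrow> nat" where
  "ones k d = (\<Sum>j<k. if d j = 1 then 1 else 0)"

lemma ones_cons: "ones (Suc k) (cons a d) = (if a = 1 then 1 else 0) + ones k d"
  unfolding ones_def by (subst sum.lessThan_Suc_shift) simp

lemma sum_ones:
  assumes "\<forall>i. d i \<in> {-1,1}"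
  shows "(\<Sum>j<k. d j) = 2 * int (ones k d) - int k"
proof (induction k)
  case 0 thus ?case by (simp add: ones_def)
next
  case (Suc k)
  have "ones (Suc k) d = ones k d + (if d k = 1 then 1 else 0)" by (simp add: ones_def)
  thus ?case using Suc assms[rule_format, of k] by auto
qed

definition W :: "nat \<Rightarrow> nat \<Rightarrow> real" where
  "W k i = E k (\<lambda>d. if ones k d = i then 1 else 0)"

lemma W_eq: "W k i = real (k choose i) / 2^k"
proof (induction k arbitrary: i)
  case 0 thus ?case by (simp add: W_def ones_def)
next
  case (Suc k)
  have a: "E k (\<lambda>d. if ones (Suc k) (cons 1 d) = i then 1 else 0) = (if i = 0 then 0 else W k (i - 1))"
    by (cases i) (simp_all add: ones_cons W_def E_const)
  have b: "E k (\<lambda>d. if ones (Suc k) (cons (-1) d) = i then 1 else 0) = W k i"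
    by (simp add: ones_cons W_def)
  have "W (Suc k) i = ((if i = 0 then 0 else W k (i - 1)) + W k i) / 2"
    unfolding W_def[of "Suc k"] using a b by (simp add: W_def)
  also have "\<dots> = real (Suc k choose i) / 2 ^ Suc k"
    using Suc by (cases i) (auto simp: field_simps)
  finally show ?case .
qed

definition Lf :: "nat \<Rightarrow> nat \<Rightarrow> (nat \<Rightarrow> int) \<Rightarrow> real" where
  "Lf n m d = (if (\<Sum>j=n..m. d j) = 0 then 1 else 0)"

lemma L_Lf: "L n m x = Lf n m (digit x)"
  by (simp add: L_def Lf_def)

lemma dep_Lf: "dep (Suc m) (Lf n m)"
  unfolding dep_def Lf_def by (auto intro!: sum.cong)

definition cp :: "nat \<Rightarrow> real" where
  "cp j = real ((2*j) choose j) / 4^j"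

definition r :: "nat \<Rightarrow> real" where
  "r t = (if odd t then cp ((t+1) div 2) else 0)"

lemma Pk0:
  "E k (\<lambda>e. if (\<Sum>i<k. e i) = 0 then 1 else 0) = (if even k then cp (k div 2) else 0)"
proof -
  have "E k (\<lambda>e. if (\<Sum>i<k. e i) = 0 then 1 else 0) = E k (\<lambda>e. if 2 * int (ones k e) = int k then 1 else 0)"
    by (rule E_cong) (simp add: sum_ones)
  also have "\<dots> = (if even k then cp (k div 2) else 0)"
  proof (cases "even k")
    case True
    then obtain j where j: "k = 2*j" by auto
    have "E k (\<lambda>e. if 2 * int (ones k e) = int k then 1 else 0) = W k j"
      unfolding W_def by (rule E_cong) (auto simp: j)
    thus ?thesis by (simp add: W_eq cp_def j power_mult)
  next
    case False
    have "E k (\<lambda>e. if 2 * int (ones k e) = int k then 1 else 0) = E k (\<lambda>_. 0)"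
      by (rule E_cong) (use False in presburger)
    thus ?thesis using False by (simp add: E_const)
  qed
  finally show ?thesis .
qed

lemma cp_odd: "real ((2*i+1) choose i) / 2^(2*i+1) = cp (Suc i)"
proof -
  have s: "(2*i+1) choose (Suc i) = (2*i+1) choose i"
    using binomial_symmetric[of i "2*i+1"] by simp
  have "(2 * Suc i) choose (Suc i) = 2 * ((2*i+1) choose i)"
    using s by simp
  have f: "(4::real)^n = 2^(2*n)" for n by (simp add: power_mult)
  show ?thesis unfolding cp_def f using \<open>(2 * Suc i) choose (Suc i) = 2 * ((2*i+1) choose i)\<close>
    by (simp add: field_simps)
qed

lemma q_pos:
  assumes "1 \<le> n" "n \<le> m"
  shows "E m (\<lambda>d. Lf n m (cons 1 d)) = r (m - n)"
proof -
  define k where "k = Suc (m - n)"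
  define G where "G e = (if (\<Sum>i<k. e i) = 0 then 1 else (0::real))" for e :: "nat \<Rightarrow> int"
  have depG: "dep k G" unfolding dep_def G_def by (auto intro!: sum.cong)
  have sh: "(\<Sum>j=n..m. f j) = (\<Sum>i<k. f (n+i))" for f :: "nat \<Rightarrow> int"
    using sum.atLeastAtMost_shift_0[OF assms(2), of f] unfolding k_def
    by (simp add: atLeast0AtMost lessThan_Suc_atMost)
  have "(\<lambda>d. Lf n m (cons 1 d)) = (\<lambda>d. G (\<lambda>i. d ((n - 1) + i)))"
  proof
    fix d
    have "cons 1 d (n + i) = d ((n - 1) + i)" for i
      using assms(1) by (cases n) auto
    thus "Lf n m (cons 1 d) = G (\<lambda>i. d ((n - 1) + i))"
      unfolding Lf_def G_def sh by simp
  qed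
  moreover have "m = (n - 1) + k" using assms unfolding k_def by simp
  ultimately have "E m (\<lambda>d. Lf n m (cons 1 d)) = E k G"
    using E_shift[OF depG, of "n - 1"] by simp
  also have "\<dots> = (if even k then cp (k div 2) else 0)" unfolding G_def by (rule Pk0)
  also have "\<dots> = r (m - n)" unfolding r_def k_def by simp
  finally show ?thesis .
qed

lemma q_zero:
  "E m (\<lambda>d. Lf 0 m (cons 1 d)) = r m"
proof -
  have s: "(\<Sum>j=0..m. cons 1 d j) = 1 + (\<Sum>i<m. d i)" for d
    by (simp add: atLeast0AtMost lessThan_Suc_atMost[symmetric] sum.lessThan_Suc_shift del: sum.lessThan_Suc)
  have "E m (\<lambda>d. Lf 0 m (cons 1 d)) = E m (\<lambda>d. if 2 * int (ones m d) + 1 = int m then 1 else 0)"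
    by (rule E_cong) (auto simp: Lf_def s sum_ones)
  also have "\<dots> = r m"
  proof (cases "odd m")
    case True
    then obtain i where i: "m = 2*i+1" using oddE by blast
    have "E m (\<lambda>d. if 2 * int (ones m d) + 1 = int m then 1 else 0) = W m i"
      unfolding W_def by (rule E_cong) (auto simp: i)
    also have "W m i = real (m choose i) / 2^m" by (rule W_eq)
    also have "\<dots> = cp (Suc i)" unfolding i by (rule cp_odd)
    also have "cp (Suc i) = r m" unfolding r_def i by simp
    finally show ?thesis .
  next
    case False
    have "E m (\<lambda>d. if 2 * int (ones m d) + 1 = int m then 1 else 0) = E m (\<lambda>_. 0)"
      by (rule E_cong) (use False in presburger)
    thus ?thesis using False by (simp add: E_const r_def)
  qed
  finally show ?thesis .
qed

lemma int_L:
  assumes "n \<le> m"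
  shows "((\<lambda>x. L n m x) has_integral r (m - n)) {0..1}"
proof -
  have "((\<lambda>x. Lf n m (digit x)) has_integral E m (\<lambda>d. Lf n m (cons 1 d))) {0..1}"
    by (rule int01[OF dep_Lf])
  moreover have "E m (\<lambda>d. Lf n m (cons 1 d)) = r (m - n)"
    using q_pos[OF _ assms] q_zero[of m] by (cases "n = 0") auto
  ultimately show ?thesis by (simp add: L_Lf)
qed

lemma cp_nonneg: "0 \<le> cp j" by (simp add: cp_def)

lemma cp_le1: "cp j \<le> 1"
proof -
  have "real ((2*j) choose j) \<le> 2^(2*j)" using binomial_le_pow2[of "2*j" j]
    by (metis of_nat_le_iff of_nat_numeral of_nat_power)
  moreover have "(2::real)^(2*j) = 4^j" by (simp add: power_mult)
  ultimately show ?thesis by (simp add: cp_def)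
qed

lemma cp_0[simp]: "cp 0 = 1" by (simp add: cp_def)

lemma cb_fact: "real ((2*n) choose n) = fact (2*n) / (fact n * fact n)"
  by (subst binomial_fact) (auto simp: mult_2)

lemma aux_field: fixes y z F G P :: real
  assumes "G \<noteq> 0" "P \<noteq> 0" "y \<noteq> 0"
  shows "(2*y)*(z*F) / (y*G*(y*G)) / (4*P) = (F/(G*G)/P)*z/(2*y)"
  using assms by (simp add: field_simps)

lemma cp_Suc: "cp (Suc j) = cp j * (2*j+1) / (2*j+2)"
proof -
  have e: "2 * Suc j = Suc (Suc (2*j))" by simp
  have f3: "(fact (2 * Suc j) :: real) = (2 * (real j + 1)) * ((2 * real j + 1) * fact (2*j))"
    unfolding e fact_Suc by (simp add: algebra_simps)
  have f4: "(fact (Suc j) :: real) = (real j + 1) * fact j" unfolding fact_Suc by (simp add: algebra_simps)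
  have f5: "(4::real)^(Suc j) = 4 * 4^j" by simp
  have "cp (Suc j) = (2 * (real j + 1)) * ((2 * real j + 1) * fact (2*j)) / (((real j + 1) * fact j) * ((real j + 1) * fact j)) / (4 * 4^j)"
    unfolding cp_def cb_fact[of "Suc j"] f3 f4 f5 by simp
  also have "\<dots> = (fact (2*j) / (fact j * fact j) / 4^j) * (2 * real j + 1) / (2 * (real j + 1))"
    by (rule aux_field) auto
  finally show ?thesis unfolding cp_def cb_fact by (simp add: algebra_simps)
qed

lemma gch_step:
  fixes a :: real
  shows "(a gchoose Suc k) = (a gchoose k) * (a - of_nat k) / of_nat (Suc k)"
  by (simp add: gbinomial_prod_rev prod.atLeast0_lessThan_Suc field_simps)

lemma gch_cp: "((-1/2::real) gchoose j) * (-1)^j = cp j"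
proof (induction j)
  case 0 thus ?case by simp
next
  case (Suc j)
  have "((-1/2::real) gchoose Suc j) * (-1)^Suc j
      = (((-1/2::real) gchoose j) * (-1)^j) * ((1/2 + of_nat j) / of_nat (Suc j))"
    by (simp add: gch_step field_simps)
  also have "\<dots> = cp j * ((1/2 + of_nat j) / of_nat (Suc j))" by (simp only: Suc.IH)
  also have "\<dots> = cp j * (2*j+1) / (2*j+2)" by (simp add: field_simps)
  finally show ?case by (simp add: cp_Suc)
qed

lemma ser_x2:
  assumes "\<bar>x\<bar> < 1"
  shows "(\<lambda>j. cp j * (x^2)^j) sums (1 / sqrt (1 - x^2))"
proof -
  have z: "abs (- (x^2)) < 1" using assms by (simp add: abs_square_less_1)
  from gen_binomial_real[OF z, of "-1/2"]
  have "(\<lambda>n. ((-1/2) gchoose n) * (- (x^2))^n) sums (1 + - (x^2)) powr (-1/2)" .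
  moreover have "((-1/2) gchoose n) * (- (x^2))^n = cp n * (x^2)^n" for n
    using gch_cp[of n] by (simp add: power_minus[of "x^2"] mult.assoc)
  moreover have "(1 + - (x^2)) powr (-1/2) = 1 / sqrt (1 - x^2)"
  proof -
    have "0 \<le> 1 - x^2" using z by simp
    thus ?thesis by (simp add: powr_minus_divide powr_half_sqrt[symmetric])
  qed
  ultimately show ?thesis by simp
qed

definition bco :: "nat \<Rightarrow> real" where
  "bco n = (if even n then cp (n div 2) / real (Suc n) else 0)"

lemma bco_nonneg: "0 \<le> bco n" by (simp add: bco_def cp_nonneg)

lemma ser_even:
  assumes "\<bar>x\<bar> < 1"
  shows "(\<lambda>n. bco n * real (Suc n) * x^n) sums (1 / sqrt (1 - x^2))"
proof -
  from sums_if[OF sums_zero ser_x2[OF assms]]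
  have "(\<lambda>n. if even n then cp (n div 2) * (x^2)^(n div 2) else 0) sums (0 + 1 / sqrt (1 - x^2))"
    by simp
  moreover have "(\<lambda>n. if even n then cp (n div 2) * (x^2)^(n div 2) else 0) = (\<lambda>n. bco n * real (Suc n) * x^n)"
  proof
    fix n show "(if even n then cp (n div 2) * (x^2)^(n div 2) else 0) = bco n * real (Suc n) * x^n"
      by (cases "even n") (auto simp: bco_def power_mult[symmetric] simp del: of_nat_Suc)
  qed
  ultimately show ?thesis by simp
qed

lemma A_deriv:
  assumes "\<bar>x\<bar> < 1"
  shows "DERIV (\<lambda>x. \<Sum>n. bco n * x^(Suc n)) x :> inverse (sqrt (1 - x^2))"
proof -
  have "DERIV (\<lambda>x. \<Sum>n. bco n * x^(Suc n)) x :> (\<Sum>n. bco n * real (Suc n) * x^n)"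
    by (rule DERIV_power_series'[where R=1]) (use assms ser_even in \<open>auto simp: sums_iff\<close>)
  moreover have "(\<Sum>n. bco n * real (Suc n) * x^n) = inverse (sqrt (1 - x^2))"
    using sums_unique[OF ser_even[OF assms]] by (simp add: inverse_eq_divide)
  ultimately show ?thesis by simp
qed

lemma A_eq:
  assumes "0 \<le> x" "x < 1"
  shows "(\<Sum>n. bco n * x^(Suc n)) = arcsin x"
proof (cases "x = 0")
  case True thus ?thesis by simp
next
  case False
  hence "0 < x" using assms by simp
  let ?f = "\<lambda>x. (\<Sum>n. bco n * x^(Suc n)) - arcsin x"
  have d: "DERIV ?f y :> 0" if "0 \<le> y" "y \<le> x" for y
  proof -
    have y: "-1 < y" "y < 1" "\<bar>y\<bar> < 1" using that assms by auto
    from DERIV_diff[OF A_deriv[OF y(3)] DERIV_arcsin[OF y(1,2)]] show ?thesis by simp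
  qed
  have "?f x = ?f 0"
  proof (rule DERIV_isconst2[OF \<open>0 < x\<close>])
    show "continuous_on {0..x} ?f"
      using d by (intro DERIV_atLeastAtMost_imp_continuous_on) blast
    show "\<And>y. 0 < y \<Longrightarrow> y < x \<Longrightarrow> DERIV ?f y :> 0" using d by simp
  qed (use assms in auto)
  thus ?thesis by simp
qed

lemma A_summable:
  assumes "0 \<le> x" "x < 1"
  shows "summable (\<lambda>n. bco n * x^(Suc n))"
proof (rule summable_comparison_test')
  show "summable (\<lambda>n. bco n * real (Suc n) * x^n)" using ser_even assms by (auto simp: sums_iff)
  fix n
  have "bco n * x^(Suc n) \<le> bco n * real (Suc n) * x^n"
  proof -
    have "x^(Suc n) \<le> real (Suc n) * x^n"
      using assms by (simp add: mult_right_mono)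
    thus ?thesis using bco_nonneg[of n] by (simp add: mult.assoc mult_left_mono)
  qed
  thus "norm (bco n * x^(Suc n)) \<le> bco n * real (Suc n) * x^n"
    using bco_nonneg[of n] assms by simp
qed

lemma bco_sums: "bco sums (pi/2)"
proof -
  define xs where "xs k = 1 - 1 / real (k + 2)" for k
  have xs: "0 \<le> xs k" "xs k < 1" for k by (auto simp: xs_def field_simps)
  have xs_lim: "xs \<longlonglongrightarrow> 1"
  proof -
    have "(\<lambda>k. 1 / real (k + 2)) \<longlonglongrightarrow> 0"
      using LIMSEQ_ignore_initial_segment[OF lim_const_over_n[of 1], of 2]
      by (simp add: add.commute)
    hence "(\<lambda>k. 1 - 1 / real (k + 2)) \<longlonglongrightarrow> 1 - 0" by (intro tendsto_intros)
    moreover have "xs = (\<lambda>k. 1 - 1 / real (k + 2))" by (rule ext) (simp only: xs_def)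
    ultimately show ?thesis by simp
  qed
  have bd: "sum bco {..<N} \<le> pi/2" for N
  proof (rule LIMSEQ_le_const2[where X="\<lambda>k. \<Sum>n<N. bco n * (xs k)^(Suc n)"])
    have "(\<lambda>k. \<Sum>n<N. bco n * (xs k)^(Suc n)) \<longlonglongrightarrow> (\<Sum>n<N. bco n * 1^(Suc n))"
      by (intro tendsto_intros xs_lim)
    thus "(\<lambda>k. \<Sum>n<N. bco n * (xs k)^(Suc n)) \<longlonglongrightarrow> sum bco {..<N}" by simp
    have "(\<Sum>n<N. bco n * (xs k)^(Suc n)) \<le> pi/2" for k
    proof -
      have "(\<Sum>n<N. bco n * (xs k)^(Suc n)) \<le> (\<Sum>n. bco n * (xs k)^(Suc n))"
        by (rule sum_le_suminf[OF A_summable[OF xs]]) (use bco_nonneg xs in auto)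
      also have "\<dots> = arcsin (xs k)" by (rule A_eq[OF xs])
      also have "\<dots> \<le> pi/2" by (rule arcsin_ubound) (use xs[of k] in auto)
      finally show ?thesis .
    qed
    thus "\<exists>M. \<forall>k\<ge>M. (\<Sum>n<N. bco n * (xs k)^(Suc n)) \<le> pi/2" by blast
  qed
  have sm: "summable bco" by (rule summableI_nonneg_bounded[OF bco_nonneg bd])
  have le: "suminf bco \<le> pi/2" by (rule suminf_le_const[OF sm bd])
  have ge: "arcsin x \<le> suminf bco" if "0 \<le> x" "x < 1" for x
  proof -
    have "arcsin x = (\<Sum>n. bco n * x^(Suc n))" using A_eq[OF that] by simp
    also have "\<dots> \<le> suminf bco"
    proof (rule suminf_le[OF _ A_summable[OF that] sm])
      fix n have "x^(Suc n) \<le> 1" using that by (intro power_le_one) auto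
      thus "bco n * x^(Suc n) \<le> bco n" using bco_nonneg[of n] by (simp add: mult_left_le)
    qed
    finally show ?thesis .
  qed
  have "suminf bco = pi/2"
  proof (rule ccontr)
    assume "suminf bco \<noteq> pi/2"
    hence lt: "suminf bco < pi/2" using le by simp
    have s0: "0 \<le> suminf bco" by (rule suminf_nonneg[OF sm bco_nonneg])
    define y where "y = (suminf bco + pi/2) / 2"
    have y: "0 \<le> y" "y < pi/2" "suminf bco < y" using lt s0 by (auto simp: y_def)
    have as: "arcsin (sin y) = y" by (rule arcsin_sin) (use y in auto)
    have sy: "0 \<le> sin y" by (rule sin_ge_zero) (use y in auto)
    have "sin y \<noteq> 1" using as y by auto
    moreover have "sin y \<le> 1" by simp
    ultimately have "sin y < 1" by linarith
    from ge[OF sy this] as y show False by simp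
  qed
  thus ?thesis using sm by (simp add: sums_iff)
qed

lemma even_spread:
  assumes "(\<lambda>n. if even n then g (n div 2) else 0) sums s"
  shows "g sums (s::real)"
proof -
  let ?h = "\<lambda>n. if even n then g (n div 2) else 0"
  have "(\<lambda>N. sum ?h {..<N}) \<longlonglongrightarrow> s" using assms by (simp add: sums_def)
  from LIMSEQ_subseq_LIMSEQ[OF this, of "\<lambda>N. 2*N"]
  have "(\<lambda>N. sum ?h {..<2*N}) \<longlonglongrightarrow> s" by (simp add: strict_mono_def o_def)
  moreover have "sum ?h {..<2*N} = sum g {..<N}" for N
    using sum_split_even_odd[of "\<lambda>n. g (n div 2)" "\<lambda>_. 0" N] by simp
  ultimately show ?thesis by (simp add: sums_def)
qed

lemma arcsin_series: "(\<lambda>j. cp j / real (2*j+1)) sums (pi/2)"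
proof (rule even_spread)
  have "(\<lambda>n. if even n then cp (n div 2) / real (2*(n div 2)+1) else 0) = bco"
    by (auto simp: bco_def)
  thus "(\<lambda>n. if even n then cp (n div 2) / real (2*(n div 2)+1) else 0) sums (pi/2)"
    using bco_sums by simp
qed

lemma h_sq: fixes y :: real assumes "0 \<le> y"
  shows "1 / (2*y+1) * ((2*y+1) / (2*y+2))^2 \<le> 1 / (2*y+3)"
proof -
  have nz: "2*y+1 > 0" "2*y+2 > 0" "2*y+3 > 0" using assms by auto
  have "(2*y+1)*(2*y+3) \<le> (2*y+2)*(2*y+2)" by (simp add: algebra_simps)
  thus ?thesis using nz by (simp add: divide_simps power2_eq_square)
qed
lemma h_cat: fixes y c :: real assumes "0 \<le> y"
  shows "c - c * (2*y+1) / (2*y+2) = c / (y+1) / 2"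
proof -
  have nz: "2*y+2 \<noteq> 0" "y + 1 \<noteq> 0" using assms by auto
  show ?thesis using nz by (simp add: divide_simps; simp add: algebra_simps)
qed
lemma h_ln: fixes y :: real assumes "0 \<le> y"
  shows "2 * (inverse (2*y+3) - inverse (2*y+4)) = 2 / ((2*y+1+2)*(2*y+1+3))"
proof -
  have nz: "2*y+3 \<noteq> 0" "2*y+4 \<noteq> 0" using assms by auto
  have e: "2*y+1+2 = 2*y+3" "2*y+1+3 = 2*y+4" by simp_all
  show ?thesis unfolding e using nz by (simp add: divide_simps; simp add: algebra_simps)
qed
lemma h_pi: fixes y :: real
  shows "2 / ((2 * (y+1) + 1) * (2 * (y+1) + 2)) = 2 / ((2*y+1+2)*(2*y+1+3))"
  by (simp add: algebra_simps)
lemma h_av: fixes y :: real assumes "0 \<le> y"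
  shows "2 / ((y + 2) * (y + 3)) * y \<le> 2 / (y + 3)"
proof -
  have nz: "y+2 > 0" "y + 3 > 0" using assms by auto
  thus ?thesis using nz by (simp add: divide_simps)
qed

lemma q_sq: "1 / real (2*j+1) * (real (2*j+1) / real (2*j+2))^2 \<le> 1 / real (2 * Suc j + 1)"
proof -
  have "(2*j+1)*(2*j+3) \<le> (2*j+2)*(2*j+2)" by (simp add: algebra_simps)
  hence "real (2*j+1) * real (2*j+3) \<le> real (2*j+2) * real (2*j+2)"
    by (metis of_nat_le_iff of_nat_mult)
  thus ?thesis by (simp add: divide_simps power2_eq_square add.commute)
qed
lemma q_cat: fixes c :: real
  shows "c - c * real (2*j+1) / real (2*j+2) = c / real (j+1) / 2"
proof -
  have nz: "real (2*j+2) \<noteq> 0" "real (j+1) \<noteq> 0" by auto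
  show ?thesis using nz by (simp add: divide_simps; simp add: algebra_simps)
qed
lemma cp_sq: "(cp j)^2 \<le> 1 / real (2*j+1)"
proof (induction j)
  case 0 thus ?case by simp
next
  case (Suc j)
  have "(cp (Suc j))^2 = (cp j)^2 * ((2*j+1) / (2*j+2))^2"
    by (simp add: cp_Suc power_mult_distrib power_divide)
  also have "\<dots> \<le> 1 / real (2*j+1) * ((2*j+1) / (2*j+2))^2"
    by (rule mult_right_mono[OF Suc]) simp
  also have "\<dots> \<le> 1 / real (2 * Suc j + 1)"
    using q_sq[of j] by simp
  finally show ?case .
qed

lemma cp_lim: "cp \<longlonglongrightarrow> 0"
proof -
  have "(\<lambda>j. (cp j)^2) \<longlonglongrightarrow> 0"
  proof (rule Lim_null_comparison)
    show "\<forall>\<^sub>F j in sequentially. norm ((cp j)^2) \<le> 1 / real (j+1)"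
    proof (intro always_eventually allI)
      fix j
      have "(cp j)^2 \<le> 1 / real (2*j+1)" by (rule cp_sq)
      also have "\<dots> \<le> 1 / real (j+1)" by (simp add: frac_le)
      finally show "norm ((cp j)^2) \<le> 1 / real (j+1)" by simp
    qed
    show "(\<lambda>j. 1 / real (j+1)) \<longlonglongrightarrow> 0"
      using LIMSEQ_ignore_initial_segment[OF lim_const_over_n[of 1], of 1] by simp
  qed
  hence "(\<lambda>j. sqrt ((cp j)^2)) \<longlonglongrightarrow> sqrt 0" by (intro tendsto_intros)
  thus ?thesis using cp_nonneg by simp
qed

lemma cat_series: "(\<lambda>j. cp j / real (j+1)) sums 2"
proof -
  from telescope_sums'[OF cp_lim]
  have "(\<lambda>j. cp j - cp (Suc j)) sums (cp 0 - 0)" .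
  moreover have "cp j - cp (Suc j) = (cp j / real (j+1)) / 2" for j
    using q_cat[of "cp j" j] by (simp add: cp_Suc)
  ultimately have "(\<lambda>j. (cp j / real (j+1)) / 2) sums 1" by simp
  from sums_mult[OF this, of 2] have "(\<lambda>j. 2 * ((cp j / real (j+1)) / 2)) sums 2" by simp
  moreover have "(\<lambda>j. 2 * ((cp j / real (j+1)) / 2)) = (\<lambda>j. cp j / real (j+1))"
  proof -
    have h2: "2 * (x / 2) = (x::real)" for x by simp
    show ?thesis by (simp only: h2)
  qed
  ultimately show ?thesis by simp
qed

definition a :: "nat \<Rightarrow> real" where "a m = 2 / ((real m + 2) * (real m + 3))"
definition w :: "nat \<Rightarrow> real" where "w m = 4 / ((real m + 2) * (real m + 3) * (real m + 4))"

lemma h_w: fixes y :: real assumes "0 \<le> y"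
  shows "4 / ((y + 2) * (y + 3) * (y + 4)) = 2 / ((y + 2) * (y + 3)) - 2 / ((y + 1 + 2) * (y + 1 + 3))"
proof -
  have nz: "y + 2 \<noteq> 0" "y + 3 \<noteq> 0" "y + 4 \<noteq> 0" using assms by auto
  have e: "y + 1 + 2 = y + 3" "y + 1 + 3 = y + 4" by simp_all
  show ?thesis unfolding e using nz by (simp add: divide_simps; simp add: algebra_simps)
qed

lemma w_a: "w m = a m - a (Suc m)"
  unfolding w_def a_def using h_w[of "real m"] by simp

lemma T_series: "(\<lambda>j. cp j * (2 / ((2 * real j + 1) * (2 * real j + 2)))) sums (pi - 2)"
proof -
  have "(\<lambda>j. 2 * (cp j / real (2*j+1)) - cp j / real (j+1)) sums (2 * (pi/2) - 2)"
    by (intro sums_diff sums_mult arcsin_series cat_series)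
  moreover have "2 * (cp j / real (2*j+1)) - cp j / real (j+1) = cp j * (2 / ((2 * real j + 1) * (2 * real j + 2)))" for j
  proof -
    have nz: "2*real j+1 \<noteq> 0" "real j + 1 \<noteq> 0" "2*real j+2 \<noteq> 0" by auto
    show ?thesis using nz by (simp add: divide_simps; simp add: algebra_simps)
  qed
  ultimately show ?thesis by simp
qed

lemma sums_pi3: "(\<lambda>t. r t * a t) sums (pi - 3)"
proof -
  have "(\<lambda>j. cp (Suc j) * (2 / ((2 * real (Suc j) + 1) * (2 * real (Suc j) + 2)))) sums (pi - 2 - cp 0 * (2 / ((2 * real 0 + 1) * (2 * real 0 + 2))))"
    using T_series by (subst sums_Suc_iff) simp
  moreover have "cp (Suc j) * (2 / ((2 * real (Suc j) + 1) * (2 * real (Suc j) + 2))) = cp (Suc j) * a (2*j+1)" for j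
    unfolding a_def using h_pi[of "real j"] by simp
  moreover have "pi - 2 - cp 0 * (2 / ((2 * real 0 + 1) * (2 * real 0 + 2))) = pi - 3" by simp
  ultimately have "(\<lambda>j. cp (Suc j) * a (2*j+1)) sums (pi - 3)" by simp
  from sums_if'[OF this]
  have "(\<lambda>t. if even t then 0 else cp (Suc ((t - 1) div 2)) * a (2 * ((t - 1) div 2) + 1)) sums (pi - 3)" .
  moreover have "(if even t then 0 else cp (Suc ((t - 1) div 2)) * a (2 * ((t - 1) div 2) + 1)) = r t * a t" for t
  proof (cases "even t")
    case False
    then obtain i where "t = 2*i+1" using oddE by blast
    thus ?thesis by (simp add: r_def)
  qed (simp add: r_def)
  ultimately show ?thesis by simp
qed

lemma sums_ln2: "(\<lambda>t. (if odd t then 1 else 0) * a t) sums (2 * ln 2 - 1)"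
proof -
  let ?f = "\<lambda>k. inverse (real (2*k+1)) - inverse (real (2*k+2))"
  have "(\<lambda>k. ?f (Suc k)) sums (ln 2 - ?f 0)"
    using alternating_harmonic_series_sums' by (subst sums_Suc_iff) simp
  hence "(\<lambda>k. 2 * ?f (Suc k)) sums (2 * (ln 2 - 1/2))" by (intro sums_mult) simp
  moreover have "2 * ?f (Suc k) = a (2*k+1)" for k
    unfolding a_def using h_ln[of "real k"] by (simp add: algebra_simps)
  ultimately have "(\<lambda>k. a (2*k+1)) sums (2 * ln 2 - 1)" by (simp add: algebra_simps)
  from sums_if'[OF this]
  have "(\<lambda>t. if even t then 0 else a (2 * ((t - 1) div 2) + 1)) sums (2 * ln 2 - 1)" .
  moreover have "(if even t then 0 else a (2 * ((t - 1) div 2) + 1)) = (if odd t then 1 else 0) * a t" for t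
  proof (cases "even t")
    case False
    then obtain i where "t = 2*i+1" using oddE by blast
    thus ?thesis by simp
  qed simp
  ultimately show ?thesis by simp
qed

lemma sbp:
  fixes f :: "nat \<Rightarrow> real"
  assumes "(\<lambda>t. f t * a t) sums s" "(\<lambda>M. a M * (\<Sum>t<M. f t)) \<longlonglongrightarrow> 0"
  shows "(\<lambda>m. w m * (\<Sum>t\<le>m. f t)) sums s"
proof -
  have id: "(\<Sum>m<M. w m * (\<Sum>t\<le>m. f t)) = (\<Sum>t<M. f t * a t) - a M * (\<Sum>t<M. f t)" for M
  proof (induction M)
    case 0 thus ?case by simp
  next
    case (Suc M)
    have "(\<Sum>t\<le>M. f t) = (\<Sum>t<Suc M. f t)" by (simp add: lessThan_Suc_atMost)
    thus ?case using Suc by (simp add: w_a algebra_simps)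
  qed
  have "(\<lambda>M. (\<Sum>t<M. f t * a t) - a M * (\<Sum>t<M. f t)) \<longlonglongrightarrow> s - 0"
    using assms by (intro tendsto_intros) (simp_all add: sums_def)
  thus ?thesis unfolding sums_def id by simp
qed

lemma a_vanish:
  fixes f :: "nat \<Rightarrow> real"
  assumes "\<And>t. 0 \<le> f t" "\<And>t. f t \<le> 1"
  shows "(\<lambda>M. a M * (\<Sum>t<M. f t)) \<longlonglongrightarrow> 0"
proof (rule Lim_null_comparison)
  show "(\<lambda>M. 2 / real (M + 3)) \<longlonglongrightarrow> 0"
    using LIMSEQ_ignore_initial_segment[OF lim_const_over_n[of 2], of 3] by simp
  show "\<forall>\<^sub>F M in sequentially. norm (a M * (\<Sum>t<M. f t)) \<le> 2 / real (M + 3)"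
  proof (intro always_eventually allI)
    fix M
    have s0: "0 \<le> (\<Sum>t<M. f t)" using assms by (simp add: sum_nonneg)
    have s1: "(\<Sum>t<M. f t) \<le> real M" using sum_mono[of "{..<M}" f "\<lambda>_. 1"] assms by simp
    have a0: "0 \<le> a M" by (simp add: a_def)
    have "norm (a M * (\<Sum>t<M. f t)) = a M * (\<Sum>t<M. f t)" using s0 a0 by simp
    also have "\<dots> \<le> a M * real M" using s1 a0 by (simp add: mult_left_mono)
    also have "\<dots> \<le> 2 / real (M + 3)"
      unfolding a_def using h_av[of "real M"] by (simp add: add.commute)
    finally show "norm (a M * (\<Sum>t<M. f t)) \<le> 2 / real (M + 3)" .
  qed
qed

lemma r_nonneg: "0 \<le> r t" by (simp add: r_def cp_nonneg)
lemma r_le1: "r t \<le> 1" by (simp add: r_def cp_le1)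

lemma S_pi: "(\<lambda>m. w m * (\<Sum>t\<le>m. r t)) sums (pi - 3)"
  by (rule sbp[OF sums_pi3 a_vanish[OF r_nonneg r_le1]])

lemma S_ln: "(\<lambda>m. w m * (\<Sum>t\<le>m. (if odd t then 1 else 0))) sums (2 * ln 2 - 1)"
  by (rule sbp[OF sums_ln2 a_vanish]) auto

lemma rev_sum: fixes g :: "nat \<Rightarrow> real" shows "(\<Sum>n\<le>m. g (m - n)) = (\<Sum>t\<le>m. g t)"
  using sum.atLeastAtMost_rev[of g 0 m] by (simp add: atLeast0AtMost)

lemma u_w: "u n m = w m" by (simp add: u_def w_def)

lemma pair_has_sum:
  fixes g :: "nat \<Rightarrow> nat \<Rightarrow> real"
  assumes g0: "\<And>n m. 0 \<le> g n m" and gs: "(\<lambda>m. \<Sum>n\<le>m. g n m) sums s"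
  shows "((\<lambda>(n,m). g n m) has_sum s) {(n,m). n \<le> m}"
proof -
  define f' where "f' = (\<lambda>(m,n). g n m)"
  have rows: "(\<lambda>m. \<Sum>n\<le>m. g n m) summable_on UNIV"
    using gs g0 by (intro summable_nonneg_imp_summable_on) (auto simp: sums_iff sum_nonneg)
  have abs: "Infinite_Sum.abs_summable_on f' (SIGMA m:UNIV. {..m})"
  proof (rule Infinite_Sum.abs_summable_on_Sigma_iff[THEN iffD2], intro conjI ballI)
    fix m show "Infinite_Sum.abs_summable_on (\<lambda>y. f' (m, y)) {..m}" by simp
  next
    have "(\<lambda>m. \<Sum>\<^sub>\<infinity>y\<in>{..m}. norm (f' (m, y))) = (\<lambda>m. \<Sum>n\<le>m. g n m)"
      using g0 by (auto simp: f'_def)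
    moreover note rows
    ultimately show "Infinite_Sum.abs_summable_on (\<lambda>m. \<Sum>\<^sub>\<infinity>y\<in>{..m}. norm (f' (m, y))) UNIV" by simp
  qed
  hence sm: "f' summable_on (SIGMA m:UNIV. {..m})" by (rule abs_summable_summable)
  have "infsum (\<lambda>m. infsum (\<lambda>n. f' (m,n)) {..m}) UNIV = infsum f' (SIGMA m:UNIV. {..m})"
    by (rule infsum_Sigma_banach[OF sm])
  moreover have "infsum (\<lambda>m. infsum (\<lambda>n. f' (m,n)) {..m}) UNIV = s"
  proof -
    have "(\<lambda>m. infsum (\<lambda>n. f' (m,n)) {..m}) = (\<lambda>m. \<Sum>n\<le>m. g n m)" by (auto simp: f'_def)
    moreover have "((\<lambda>m. \<Sum>n\<le>m. g n m) has_sum s) UNIV"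
      by (rule sums_nonneg_imp_has_sum[OF gs]) (simp add: g0 sum_nonneg)
    ultimately show ?thesis by (simp add: infsumI)
  qed
  ultimately have hs: "(f' has_sum s) (SIGMA m:UNIV. {..m})"
    using sm by (metis has_sum_infsum)
  have img: "(\<lambda>(m,n). (n,m)) ` (SIGMA m:UNIV. {..m}) = {(n,m). n \<le> m}" by auto
  have inj: "inj_on (\<lambda>(m::nat,n::nat). (n,m)) (SIGMA m:UNIV. {..m})" by (auto simp: inj_on_def)
  have eq: "(\<lambda>(n,m). g n m) \<circ> (\<lambda>(m,n). (n,m)) = f'" by (auto simp: f'_def)
  have h1: "((\<lambda>(n,m). g n m) has_sum s) ((\<lambda>(m,n). (n,m)) ` (SIGMA m:UNIV. {..m}))"
    by (subst has_sum_reindex[OF inj]) (simp only: eq hs)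
  show ?thesis using h1 unfolding img .
qed

lemma a_nonneg: "0 \<le> a m" by (simp add: a_def)

lemma a_sums: "a sums 1"
proof -
  have "(\<lambda>m. 2 / real (m+2)) \<longlonglongrightarrow> 0"
    using LIMSEQ_ignore_initial_segment[OF lim_const_over_n[of 2], of 2] by simp
  from telescope_sums'[OF this]
  have "(\<lambda>m. 2 / real (m+2) - 2 / real (Suc m + 2)) sums (2 / real (0+2) - 0)" .
  moreover have "2 / real (m+2) - 2 / real (Suc m + 2) = a m" for m
  proof -
    have nz: "real m + 2 \<noteq> 0" "real m + 3 \<noteq> 0" by auto
    show ?thesis unfolding a_def using nz by (simp add: divide_simps; simp add: algebra_simps)
  qed
  ultimately show ?thesis by simp
qed

lemma w_nonneg: "0 \<le> w m" by (simp add: w_def)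

lemma rowbound: "real (Suc m) * w m \<le> 2 * a m"
proof -
  have nz: "real m + 2 > 0" "real m + 3 > 0" "real m + 4 > 0" by auto
  show ?thesis unfolding w_def a_def using nz by (simp add: divide_simps)
qed

lemma L01: "L n m x = 0 \<or> L n m x = 1" by (simp add: L_def)

lemma U_sums: "(\<lambda>m. \<Sum>n\<le>m. u n m * L n m x) sums U x"
proof -
  have g0: "0 \<le> u n m * L n m x" for n m using L01[of n m x] by (auto simp: u_def)
  have sm: "summable (\<lambda>m. \<Sum>n\<le>m. u n m * L n m x)"
  proof (rule summable_comparison_test')
    show "summable (\<lambda>m. 2 * a m)" using a_sums by (intro summable_mult) (simp add: sums_iff)
    fix m
    have "(\<Sum>n\<le>m. u n m * L n m x) \<le> (\<Sum>n\<le>m. w m)"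
    proof (rule sum_mono)
      fix n show "u n m * L n m x \<le> w m"
        using L01[of n m x] w_nonneg[of m] by (auto simp: u_w)
    qed
    also have "\<dots> = real (Suc m) * w m" by simp
    also have "\<dots> \<le> 2 * a m" by (rule rowbound)
    finally show "norm (\<Sum>n\<le>m. u n m * L n m x) \<le> 2 * a m"
      using g0 by (simp add: sum_nonneg)
  qed
  hence "(\<lambda>m. \<Sum>n\<le>m. u n m * L n m x) sums (suminf (\<lambda>m. \<Sum>n\<le>m. u n m * L n m x))"
    by (simp add: summable_sums)
  from pair_has_sum[OF g0 this]
  have "U x = suminf (\<lambda>m. \<Sum>n\<le>m. u n m * L n m x)"
    unfolding U_def by (simp add: infsumI)
  thus ?thesis using sm by (simp add: summable_sums)
qed

definition alt :: "nat \<Rightarrow> int" where "alt n = (if even n then 1 else -1)"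

lemma m3: "(2::int)^k mod 3 = 1 \<or> (2::int)^k mod 3 = 2"
proof (induction k)
  case 0 thus ?case by simp
next
  case (Suc k)
  have "(2::int)^Suc k mod 3 = (2 * ((2::int)^k mod 3)) mod 3" by (simp add: mod_mult_right_eq)
  thus ?case using Suc by auto
qed
lemma not3: "\<not> (3::int) dvd 2^k"
  using m3[of k] by (auto simp: dvd_eq_mod_eq_0)

lemma third_notC: "1/3 \<notin> Cset"
proof
  assume "1/3 \<in> Cset"
  then obtain j k where jk: "1/3 = real_of_int j / 2^k" unfolding Cset_def by auto
  have "(2::real)^k = 3 * real_of_int j"
  proof -
    have "(2::real)^k \<noteq> 0" by simp
    hence "(2::real)^k * (1/3) = real_of_int j" using jk by simp
    thus ?thesis by linarith
  qed
  hence "real_of_int (2^k) = real_of_int (3 * j)" by simp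
  hence "(2::int)^k = 3 * j" by (simp only: of_int_eq_iff)
  hence "(3::int) dvd 2^k" by simp
  thus False using not3 by blast
qed

lemma third_se: "signed_expansion (1/3) alt"
proof -
  have "(\<lambda>n. (-1/2::real)^n) sums (1 / (1 - (-1/2)))" by (rule geometric_sums) simp
  hence S: "(\<lambda>n. (1/2) * (-1/2::real)^n) sums ((1/2) * (1 / (1 - (-1/2))))" by (rule sums_mult)
  have feq: "(\<lambda>n. (1/2) * (-1/2::real)^n) = (\<lambda>n. real_of_int (alt n) / 2^(n+1))"
  proof
    fix n
    have "(-1/2::real)^n = (-1)^n / 2^n" by (rule power_divide)
    thus "(1/2) * (-1/2::real)^n = real_of_int (alt n) / 2^(n+1)" by (simp add: alt_def)
  qed
  have val: "(1/2) * (1 / (1 - (-1/2))) = (1/3::real)" by simp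
  have "(\<lambda>n. real_of_int (alt n) / 2^(n+1)) sums (1/3)" using S unfolding feq val .
  thus ?thesis unfolding signed_expansion_def by (auto simp: alt_def)
qed

lemma digit_third: "digit (1/3) = alt"
  by (rule digit_eq[OF third_notC third_se])

lemma alt_sum: "n \<le> m \<Longrightarrow> (\<Sum>j=n..m. alt j) = (if odd (m - n) then 0 else alt n)"
proof (induction m rule: dec_induct)
  case base thus ?case by simp
next
  case (step k)
  have "(\<Sum>j=n..Suc k. alt j) = (\<Sum>j=n..k. alt j) + alt (Suc k)"
    using step(1) by (simp add: sum.cl_ivl_Suc)
  moreover have "Suc k - n = Suc (k - n)" using step(1) by simp
  moreover have "alt (Suc k) = (if even (Suc k - n) then alt n else - alt n)"
    using step(1) by (auto simp: alt_def)
  ultimately show ?case using step(3) by (auto simp: alt_def)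
qed

lemma L_third: "n \<le> m \<Longrightarrow> L n m (1/3) = (if odd (m - n) then 1 else 0)"
  by (simp add: L_def digit_third alt_sum) (simp add: alt_def)

lemma U_third: "U (1/3) = 2 * ln 2 - 1"
proof -
  have "(\<Sum>n\<le>m. u n m * L n m (1/3)) = w m * (\<Sum>t\<le>m. (if odd t then 1 else 0))" for m
  proof -
    have "(\<Sum>n\<le>m. u n m * L n m (1/3)) = (\<Sum>n\<le>m. w m * (if odd (m - n) then 1 else 0))"
      by (rule sum.cong) (auto simp: L_third u_w)
    also have "\<dots> = w m * (\<Sum>n\<le>m. (\<lambda>t. if odd t then 1 else 0) (m - n))"
      by (simp add: sum_distrib_left)
    also have "\<dots> = w m * (\<Sum>t\<le>m. (if odd t then 1 else 0))"
      by (subst rev_sum) simp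
    finally show ?thesis .
  qed
  hence "(\<lambda>m. \<Sum>n\<le>m. u n m * L n m (1/3)) sums (2 * ln 2 - 1)" using S_ln by simp
  thus ?thesis using U_sums[of "1/3"] sums_unique2 by blast
qed

definition fM :: "nat \<Rightarrow> real \<Rightarrow> real" where
  "fM M x = (\<Sum>m<M. \<Sum>n\<le>m. u n m * L n m x)"

lemma L_nonneg: "0 \<le> L n m x" and L_le1: "L n m x \<le> 1" by (auto simp: L_def)
lemma u_nonneg: "0 \<le> u n m" by (simp add: u_def)

lemma fM_mono: "fM M x \<le> fM (Suc M) x"
  unfolding fM_def by (simp add: sum_nonneg mult_nonneg_nonneg L_nonneg u_nonneg)

lemma fM_lim: "(\<lambda>M. fM M x) \<longlonglongrightarrow> U x"
  using U_sums[of x] unfolding sums_def fM_def .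

lemma row_int:
  assumes "\<And>n. n \<le> m \<Longrightarrow> (L n m has_integral (q n)) S"
  shows "((\<lambda>x. \<Sum>n\<le>m. u n m * L n m x) has_integral (\<Sum>n\<le>m. u n m * q n)) S"
  by (rule has_integral_sum) (auto intro: has_integral_mult_right assms)

lemma fM_int_gen:
  assumes "\<And>n m. n \<le> m \<Longrightarrow> (L n m has_integral (q n m)) S"
  shows "(fM M has_integral (\<Sum>m<M. \<Sum>n\<le>m. u n m * q n m)) S"
  unfolding fM_def by (rule has_integral_sum) (auto intro: row_int assms)

lemma fM_int01: "(fM M has_integral (\<Sum>m<M. w m * (\<Sum>t\<le>m. r t))) {0..1}"
proof -
  have "(fM M has_integral (\<Sum>m<M. \<Sum>n\<le>m. u n m * r (m - n))) {0..1}"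
    by (rule fM_int_gen) (rule int_L)
  moreover have "(\<Sum>n\<le>m. u n m * r (m - n)) = w m * (\<Sum>t\<le>m. r t)" for m
    by (simp add: u_w sum_distrib_left[symmetric] rev_sum[of r m])
  ultimately show ?thesis by simp
qed

theorem int_U: "(U has_integral (pi - 3)) {0..1}"
proof -
  define P where "P M = (\<Sum>m<M. w m * (\<Sum>t\<le>m. r t))" for M
  have P_lim: "P \<longlonglongrightarrow> pi - 3" using S_pi unfolding sums_def P_def .
  have ints: "integral {0..1} (fM k) = P k" for k
    using fM_int01[of k] unfolding P_def by (rule integral_unique)
  have mc: "U integrable_on {0..1} \<and> (\<lambda>k. integral {0..1} (fM k)) \<longlonglongrightarrow> integral {0..1} U"
  proof (rule monotone_convergence_increasing)
    show "fM k integrable_on {0..1}" for k using fM_int01 by blast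
    show "fM k x \<le> fM (Suc k) x" for k x by (rule fM_mono)
    show "(\<lambda>k. fM k x) \<longlonglongrightarrow> U x" for x by (rule fM_lim)
    show "bounded (range (\<lambda>k. integral {0..1} (fM k)))"
      unfolding ints using convergent_imp_bounded[OF P_lim] by simp
  qed
  hence "P \<longlonglongrightarrow> integral {0..1} U" unfolding ints by simp
  hence "integral {0..1} U = pi - 3" using P_lim LIMSEQ_unique by blast
  thus ?thesis using mc integrable_integral by fastforce
qed

lemma E_bounds: "(\<And>d. 0 \<le> F d \<and> F d \<le> 1) \<Longrightarrow> 0 \<le> E N F \<and> E N F \<le> 1"
proof (induction N arbitrary: F)
  case 0 thus ?case by simp
next
  case (Suc N)
  have "0 \<le> E N (\<lambda>d. F (cons 1 d)) \<and> E N (\<lambda>d. F (cons 1 d)) \<le> 1" by (rule Suc.IH) (use Suc.prems in auto)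
  moreover have "0 \<le> E N (\<lambda>d. F (cons (-1) d)) \<and> E N (\<lambda>d. F (cons (-1) d)) \<le> 1" by (rule Suc.IH) (use Suc.prems in auto)
  ultimately show ?case by simp
qed

lemma int_L11:
  assumes "n \<le> m"
  shows "(L n m has_integral (2 * E (Suc m) (Lf n m))) {-1..1}"
proof -
  have eq: "L n m = (\<lambda>x. Lf n m (digit x))" by (rule ext) (rule L_Lf)
  show ?thesis unfolding eq by (rule int_main[OF dep_Lf])
qed

lemma U_integrable11: "U integrable_on {-1..1}"
proof -
  define P where "P M = (\<Sum>m<M. \<Sum>n\<le>m. u n m * (2 * E (Suc m) (Lf n m)))" for M
  have ints: "integral {-1..1} (fM k) = P k" for k
    unfolding P_def by (rule integral_unique[OF fM_int_gen[OF int_L11]])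
  have Eb: "0 \<le> E (Suc m) (Lf n m) \<and> E (Suc m) (Lf n m) \<le> 1" for n m
    by (rule E_bounds) (simp add: Lf_def)
  have Pb: "0 \<le> P M \<and> P M \<le> 4" for M
  proof
    show "0 \<le> P M" unfolding P_def using Eb by (intro sum_nonneg mult_nonneg_nonneg) (auto simp: u_nonneg)
    have Eb': "u n m * (2 * E (Suc m) (Lf n m)) \<le> w m * 2" for n m
      using Eb[where n=n and m=m] w_nonneg[of m] by (simp add: u_w mult_left_le del: E.simps)
    have "P M \<le> (\<Sum>m<M. \<Sum>n\<le>m. w m * 2)"
      unfolding P_def by (intro sum_mono Eb')
    also have "\<dots> = (\<Sum>m<M. 2 * (real (Suc m) * w m))" by (simp add: algebra_simps)
    also have "\<dots> \<le> (\<Sum>m<M. 4 * a m)" by (intro sum_mono) (use rowbound in \<open>smt (verit)\<close>)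
    also have "\<dots> = 4 * (\<Sum>m<M. a m)" by (simp add: sum_distrib_left)
    also have "(\<Sum>m<M. a m) \<le> suminf a"
      using a_sums by (intro sum_le_suminf) (auto simp: sums_iff a_nonneg)
    hence "4 * (\<Sum>m<M. a m) \<le> 4" using sums_unique[OF a_sums] by simp
    finally show "P M \<le> 4" .
  qed
  have "U integrable_on {-1..1} \<and> (\<lambda>k. integral {-1..1} (fM k)) \<longlonglongrightarrow> integral {-1..1} U"
  proof (rule monotone_convergence_increasing)
    show "fM k integrable_on {-1..1}" for k using fM_int_gen[OF int_L11] by blast
    show "fM k x \<le> fM (Suc k) x" for k x by (rule fM_mono)
    show "(\<lambda>k. fM k x) \<longlonglongrightarrow> U x" for x by (rule fM_lim)
    show "bounded (range (\<lambda>k. integral {-1..1} (fM k)))"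
      unfolding ints bounded_iff using Pb by (intro exI[of _ 4]) auto
  qed
  thus ?thesis by simp
qed

lemma U_meas: "(\<lambda>x. ereal (U x)) \<in> borel_measurable (lebesgue_on {-1..1})"
  by (rule borel_measurable_ereal[OF integrable_imp_measurable[OF U_integrable11]])

lemma parity_sum:
  fixes d :: "nat \<Rightarrow> int"
  assumes "\<forall>i. d i \<in> {-1,1}" "n \<le> m"
  shows "even (\<Sum>j=n..m. d j) \<longleftrightarrow> odd (m - n)"
  using assms(2)
proof (induction m rule: dec_induct)
  case base thus ?case using assms(1)[rule_format, of n] by auto
next
  case (step k)
  have "(\<Sum>j=n..Suc k. d j) = (\<Sum>j=n..k. d j) + d (Suc k)"
    using step(1) by (simp add: sum.cl_ivl_Suc)
  moreover have "Suc k - n = Suc (k - n)" using step(1) by simp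
  moreover have "odd (d (Suc k))" using assms(1)[rule_format, of "Suc k"] by auto
  ultimately show ?case using step(3) by auto
qed

lemma L_le_third:
  assumes "-1 \<le> x" "x \<le> 1" "x \<notin> Cset" "n \<le> m"
  shows "L n m x \<le> L n m (1/3)"
proof (cases "L n m x = 0")
  case True thus ?thesis by (simp add: L_nonneg)
next
  case False
  hence "(\<Sum>j=n..m. digit x j) = 0" by (auto simp: L_def split: if_splits)
  moreover have "\<forall>i. digit x i \<in> {-1,1}" using se_dig[OF digit_se[OF assms(1-3)]] by blast
  ultimately have "odd (m - n)" using parity_sum[of "digit x" n m] assms(4) by simp
  thus ?thesis using L_third[OF assms(4)] L_le1[of n m x] by simp
qed

lemma U_le:
  assumes "-1 \<le> x" "x \<le> 1" "x \<notin> Cset"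
  shows "U x \<le> 2 * ln 2 - 1"
proof -
  have "U x \<le> U (1/3)"
  proof (rule sums_le[OF _ U_sums U_sums])
    fix m show "(\<Sum>n\<le>m. u n m * L n m x) \<le> (\<Sum>n\<le>m. u n m * L n m (1/3))"
      by (intro sum_mono mult_left_mono L_le_third assms) (auto simp: u_nonneg)
  qed
  thus ?thesis by (simp add: U_third)
qed

lemma null_C11: "Cset \<inter> {-1..1} \<in> null_sets (lebesgue_on {-1..1})"
proof -
  have "negligible (Cset \<inter> {-1..1})" by (rule negligible_subset[OF negligible_Cset]) auto
  hence "Cset \<inter> {-1..1} \<in> null_sets lebesgue" by (simp add: negligible_iff_null_sets)
  moreover have "{-1..1::real} \<in> sets lebesgue" by simp
  ultimately show ?thesis by (simp add: null_sets_restrict_space)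
qed

lemma esssup_le: "esssup (lebesgue_on {-1..1}) (\<lambda>x. ereal (U x)) \<le> ereal (2 * ln 2 - 1)"
proof (rule esssup_I[OF U_meas])
  show "AE x in lebesgue_on {-1..1}. ereal (U x) \<le> ereal (2 * ln 2 - 1)"
    by (rule AE_I'[OF null_C11]) (auto intro: U_le)
qed

lemma E_nonneg: "(\<And>d. 0 \<le> F d) \<Longrightarrow> 0 \<le> E N F"
proof (induction N arbitrary: F)
  case 0 thus ?case by simp
next
  case (Suc N)
  have "0 \<le> E N (\<lambda>d. F (cons 1 d))" by (rule Suc.IH) (use Suc.prems in auto)
  moreover have "0 \<le> E N (\<lambda>d. F (cons (-1) d))" by (rule Suc.IH) (use Suc.prems in auto)
  ultimately show ?case by simp
qed

definition pre :: "nat \<Rightarrow> (nat \<Rightarrow> int) \<Rightarrow> nat \<Rightarrow> int" where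
  "pre N d0 = (\<lambda>i. if i < N then d0 i else 1)"

lemma E_pre:
  "(\<forall>i. d0 i \<in> {-1,1}) \<Longrightarrow> (\<And>d. 0 \<le> F d) \<Longrightarrow> F (pre N d0) / 2^N \<le> E N F"
proof (induction N arbitrary: F d0)
  case 0 thus ?case by (simp add: pre_def)
next
  case (Suc N)
  define a0 where "a0 = d0 0"
  define d1 where "d1 = (\<lambda>i. d0 (Suc i))"
  have d1: "\<forall>i. d1 i \<in> {-1,1}" using Suc.prems(1) by (simp add: d1_def)
  have IH: "F (cons a0 (pre N d1)) / 2^N \<le> E N (\<lambda>d. F (cons a0 d))"
    by (rule Suc.IH[OF d1]) (use Suc.prems in auto)
  have eqp: "cons a0 (pre N d1) = pre (Suc N) d0"
    by (rule ext) (auto simp: cons_def pre_def a0_def d1_def split: nat.split)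
  have n1: "0 \<le> E N (\<lambda>d. F (cons 1 d))" by (rule E_nonneg) (use Suc.prems in auto)
  have n2: "0 \<le> E N (\<lambda>d. F (cons (-1) d))" by (rule E_nonneg) (use Suc.prems in auto)
  have es: "E (Suc N) F = (E N (\<lambda>d. F (cons 1 d)) + E N (\<lambda>d. F (cons (-1) d))) / 2" by simp
  have "a0 = 1 \<or> a0 = -1" using Suc.prems(1) unfolding a0_def by auto
  hence "E N (\<lambda>d. F (cons a0 d)) / 2 \<le> E (Suc N) F"
    unfolding es using n1 n2 by (elim disjE) simp_all
  moreover have "F (pre (Suc N) d0) / 2^Suc N = (F (cons a0 (pre N d1)) / 2^N) / 2"
    using eqp by simp
  ultimately show ?case using IH by simp
qed

definition Pf :: "nat \<Rightarrow> (nat \<Rightarrow> int) \<Rightarrow> real" where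
  "Pf N d = (if \<forall>i<N. d i = alt i then 1 else 0)"

lemma dep_Pf: "dep N (Pf N)" unfolding dep_def Pf_def by auto

lemma E_Pf: "1 / 2^N \<le> E N (Pf N)"
proof -
  have "Pf N (pre N alt) / 2^N \<le> E N (Pf N)"
    by (rule E_pre) (auto simp: alt_def Pf_def)
  moreover have "Pf N (pre N alt) = 1" by (simp add: Pf_def pre_def)
  ultimately show ?thesis by simp
qed

lemma row_third: "(\<Sum>n\<le>m. u n m * L n m (1/3)) = w m * (\<Sum>t\<le>m. (if odd t then 1 else 0))"
proof -
  have "(\<Sum>n\<le>m. u n m * L n m (1/3)) = (\<Sum>n\<le>m. w m * (if odd (m - n) then 1 else 0))"
    by (rule sum.cong) (auto simp: L_third u_w)
  also have "\<dots> = w m * (\<Sum>n\<le>m. (\<lambda>t. if odd t then 1 else 0) (m - n))"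
    by (simp add: sum_distrib_left)
  also have "\<dots> = w m * (\<Sum>t\<le>m. (if odd t then 1 else 0))"
    by (subst rev_sum) simp
  finally show ?thesis .
qed

definition sN :: "nat \<Rightarrow> real" where
  "sN N = (\<Sum>m<N. w m * (\<Sum>t\<le>m. (if odd t then 1 else 0)))"

lemma sN_lim: "sN \<longlonglongrightarrow> 2 * ln 2 - 1"
  using S_ln unfolding sums_def sN_def .

lemma prefix_bound:
  assumes "-1 \<le> x" "x \<le> 1" "x \<notin> Cset" "Pf N (digit x) \<noteq> 0"
  shows "sN N \<le> U x"
proof -
  have pre: "\<And>i. i < N \<Longrightarrow> digit x i = alt i" using assms(4) by (auto simp: Pf_def split: if_splits)
  have "L n m x = L n m (1/3)" if "m < N" for n m
  proof -
    have "(\<Sum>j=n..m. digit x j) = (\<Sum>j=n..m. alt j)"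
      by (rule sum.cong) (use pre that in auto)
    thus ?thesis by (simp add: L_def digit_third)
  qed
  hence "fM N x = sN N"
    unfolding fM_def sN_def by (simp add: row_third[symmetric])
  moreover have "fM N x \<le> U x"
  proof -
    have "fM N x \<le> suminf (\<lambda>m. \<Sum>n\<le>m. u n m * L n m x)"
      unfolding fM_def
      by (rule sum_le_suminf) (use U_sums[of x] in \<open>auto simp: sums_iff intro!: sum_nonneg mult_nonneg_nonneg u_nonneg L_nonneg\<close>)
    thus ?thesis using sums_unique[OF U_sums[of x]] by simp
  qed
  ultimately show ?thesis by simp
qed

lemma esssup_ge: "ereal (2 * ln 2 - 1) \<le> esssup (lebesgue_on {-1..1}) (\<lambda>x. ereal (U x))"
proof (rule ccontr)
  let ?M = "lebesgue_on {-1..1::real}"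
  let ?e = "esssup ?M (\<lambda>x. ereal (U x))"
  assume "\<not> ereal (2 * ln 2 - 1) \<le> ?e"
  hence "?e < ereal (2 * ln 2 - 1)" by simp
  then obtain c where c1: "?e < ereal c" and c2: "ereal c < ereal (2 * ln 2 - 1)"
    using ereal_dense2 by blast
  from c2 have "c < 2 * ln 2 - 1" by simp
  from order_tendstoD(1)[OF sN_lim this] obtain N where N: "c < sN N"
    by (auto simp: eventually_sequentially)
  have AE1: "AE x in ?M. ereal (U x) \<le> ?e" by (rule esssup_AE)
  have AE2: "AE x in ?M. x \<notin> Cset" by (rule AE_I'[OF null_C11]) auto
  have AE0: "AE x in ?M. x \<in> {-1..1}" by (rule AE_I2) simp
  have AE3: "AE x in ?M. Pf N (digit x) = 0"
    using AE0 AE1 AE2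
  proof eventually_elim
    case (elim x)
    show ?case
    proof (rule ccontr)
      assume "Pf N (digit x) \<noteq> 0"
      hence "sN N \<le> U x" using prefix_bound elim by auto
      moreover have "ereal (U x) < ereal c" using elim(2) c1 by (rule le_less_trans)
      ultimately show False using N by simp
    qed
  qed
  then obtain N0 where N0: "\<And>x. x \<in> space ?M - N0 \<Longrightarrow> Pf N (digit x) = 0" "N0 \<in> null_sets ?M"
    using AE_E3[OF AE3] by blast
  have "N0 \<in> null_sets lebesgue" using N0(2) by (simp add: null_sets_restrict_space)
  hence negl: "negligible N0" by (simp add: negligible_iff_null_sets)
  have "((\<lambda>x. Pf N (digit x)) has_integral 0) {-1..1}"
    by (rule has_integral_spike[OF negl _ has_integral_0]) (use N0(1) in auto)
  moreover have "((\<lambda>x. Pf N (digit x)) has_integral (2 * E N (Pf N))) {-1..1}"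
    by (rule int_main[OF dep_Pf])
  ultimately have "2 * E N (Pf N) = 0" using has_integral_unique by blast
  moreover have "0 < 1 / (2::real)^N" by simp
  ultimately show False using E_Pf[of N] by simp
qed

theorem mainTheorem3:
  shows "(U has_integral (pi - 3)) {0..1}
         \<and> U (1/3) = 2 * ln 2 - 1
         \<and> esssup (lebesgue_on {-1..1}) (\<lambda>x. ereal (U x)) = ereal (2 * ln 2 - 1)"
  using int_U U_third esssup_le esssup_ge by (auto intro: antisym)

end
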